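(* Let $R$ be a commutative Noetherian local ring with total quotient ring $Q$ (the localization at the set $S$ of nonzerodivisors), and let $M$ be a finitely generated $R$-module of constant rank $n$ such that $E=\operatorname{End}_R(M)$ is an $R^*$-algebra. Identifying $E_S\cong \operatorname{End}_Q(M_S)\cong M_n(Q)$ (via a $Q$-basis of the free $Q$-module $M_S$), the induced $Q^*$-algebra structure on $E_S$ has the form $A^*=C^{-1}A^TC$ for some invertible $C\in M_n(Q)$ and $a\in Q$ with $C^T=aC$, $a^2=1$; write $a=r/s$ with $r,s$ nonzerodivisors of $R$. Then the $R$-submodule $T=\langle s\,x\otimes y - r\,y\otimes x \mid x,y\in M\rangle$ of $M_*\otimes_E M$ is a torsion $R$-module (i.e. $T\otimes_R Q=0$).
   Context: An $R$-algebra $E$ (possibly noncommutative) is an $R^*$-algebra if there is a map of abelian groups $(-)^*:E\to E$ with $(ab)^*=b^*a^*$, $1_E^*=1_E$, $(ra)^*=ra^*$ for $r\in R$, and $a^{**}=a$ for all $a,b\in E$. $M$ is a left $E$-module via $f\cdot x=f(x)$, and $M_*$ denotes $M$ regarded as a right $E$-module via $x\cdot f=f^*(x)$. $M$ has constant rank $n$ if $M\otimes_R Q$ is a free $Q$-module of rank $n$. The $Q^*$-structure on $E_S$ is $(f/u)^*=f^*/u$. *)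

theory Defs
  imports "HOL-Analysis.Analysis" "HOL-Library.Poly_Mapping"
begin

definition nzd :: "'r::comm_ring_1 \<Rightarrow> bool" where
  "nzd s \<longleftrightarrow> (\<forall>x. s * x = 0 \<longrightarrow> x = 0)"

definition is_ideal :: "'r::comm_ring_1 set \<Rightarrow> bool" where
  "is_ideal I \<longleftrightarrow> 0 \<in> I \<and> (\<forall>x\<in>I. \<forall>y\<in>I. x + y \<in> I) \<and> (\<forall>x\<in>I. \<forall>c. c * x \<in> I)"

definition ideal_gen :: "'r::comm_ring_1 set \<Rightarrow> 'r set" where
  "ideal_gen F = {y. \<exists>c. y = (\<Sum>f\<in>F. c f * f)}"

definition noetherian_ring :: "'r::comm_ring_1 itself \<Rightarrow> bool" where
  "noetherian_ring _ \<longleftrightarrow> (\<forall>I::'r set. is_ideal I \<longrightarrow> (\<exists>F. finite F \<and> I = ideal_gen F))"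

definition maximal_ideal :: "'r::comm_ring_1 set \<Rightarrow> bool" where
  "maximal_ideal I \<longleftrightarrow> is_ideal I \<and> I \<noteq> UNIV \<and>
     (\<forall>J. is_ideal J \<and> I \<subseteq> J \<and> J \<noteq> UNIV \<longrightarrow> J = I)"

definition local_ring :: "'r::comm_ring_1 itself \<Rightarrow> bool" where
  "local_ring _ \<longleftrightarrow> (\<exists>!I::'r set. maximal_ideal I)"

text \<open>\<open>\<iota> : R \<rightarrow> Q\<close> exhibits \<open>Q\<close> as the localization of \<open>R\<close> at the set of
  nonzerodivisors (total quotient ring), via the usual universal characterization.\<close>
definition is_total_quotient_ring :: "('r::comm_ring_1 \<Rightarrow> 'q::comm_ring_1) \<Rightarrow> bool" where
  "is_total_quotient_ring \<iota> \<longleftrightarrow>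
     \<iota> 1 = 1 \<and> (\<forall>x y. \<iota> (x + y) = \<iota> x + \<iota> y) \<and> (\<forall>x y. \<iota> (x * y) = \<iota> x * \<iota> y) \<and>
     (\<forall>s. nzd s \<longrightarrow> (\<exists>q. \<iota> s * q = 1)) \<and>
     (\<forall>q. \<exists>x s. nzd s \<and> q * \<iota> s = \<iota> x) \<and>
     (\<forall>x. \<iota> x = 0 \<longrightarrow> (\<exists>s. nzd s \<and> s * x = 0))"

definition fin_gen_module :: "('r::comm_ring_1 \<Rightarrow> 'm::ab_group_add \<Rightarrow> 'm) \<Rightarrow> bool" where
  "fin_gen_module sc \<longleftrightarrow> module sc \<and> (\<exists>B. finite B \<and> module.span sc B = UNIV)"

text \<open>\<open>j : M \<rightarrow> V\<close> exhibits the \<open>Q\<close>-module \<open>V\<close> (scalar action \<open>scQ\<close>) as the localization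
  \<open>M_S \<cong> M \<otimes>\<^sub>R Q\<close>, where \<open>\<iota> : R \<rightarrow> Q\<close> is the localization map.\<close>
definition is_localized_module ::
  "('r::comm_ring_1 \<Rightarrow> 'q::comm_ring_1) \<Rightarrow> ('r \<Rightarrow> 'm::ab_group_add \<Rightarrow> 'm) \<Rightarrow>
   ('q \<Rightarrow> 'v::ab_group_add \<Rightarrow> 'v) \<Rightarrow> ('m \<Rightarrow> 'v) \<Rightarrow> bool" where
  "is_localized_module \<iota> sc scQ j \<longleftrightarrow>
     module scQ \<and> (\<forall>x y. j (x + y) = j x + j y) \<and> (\<forall>c x. j (sc c x) = scQ (\<iota> c) (j x)) \<and>
     (\<forall>v. \<exists>m s. nzd s \<and> scQ (\<iota> s) v = j m) \<and>
     (\<forall>m. j m = 0 \<longrightarrow> (\<exists>s. nzd s \<and> sc s m = 0))"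

definition End_R :: "('r::comm_ring_1 \<Rightarrow> 'm::ab_group_add \<Rightarrow> 'm) \<Rightarrow> ('m \<Rightarrow> 'm) set" where
  "End_R sc = {f. module_hom sc sc f}"

text \<open>\<open>E\<close> is an \<open>R\<^sup>*\<close>-algebra via \<open>star\<close> (multiplication in \<open>E\<close> is composition).\<close>
definition R_star_algebra :: "('r::comm_ring_1 \<Rightarrow> 'm::ab_group_add \<Rightarrow> 'm) \<Rightarrow> (('m \<Rightarrow> 'm) \<Rightarrow> ('m \<Rightarrow> 'm)) \<Rightarrow> bool" where
  "R_star_algebra sc star \<longleftrightarrow>
     (\<forall>f\<in>End_R sc. star f \<in> End_R sc) \<and>
     (\<forall>f\<in>End_R sc. \<forall>g\<in>End_R sc. star (\<lambda>x. f x + g x) = (\<lambda>x. star f x + star g x)) \<and>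
     (\<forall>f\<in>End_R sc. \<forall>g\<in>End_R sc. star (f \<circ> g) = star g \<circ> star f) \<and>
     star id = id \<and>
     (\<forall>c. \<forall>f\<in>End_R sc. star (\<lambda>x. sc c (f x)) = (\<lambda>x. sc c (star f x))) \<and>
     (\<forall>f\<in>End_R sc. star (star f) = f)"

text \<open>\<open>A\<close> is the matrix of (the localization of) \<open>f\<close> with respect to the \<open>Q\<close>-basis \<open>b\<close> of \<open>M_S\<close>:
  \<open>f\<^sub>S(\<Sum>\<^sub>k x\<^sub>k b\<^sub>k) = \<Sum>\<^sub>i (A x)\<^sub>i b\<^sub>i\<close>.\<close>
definition mat_rep ::
  "('q::comm_ring_1 \<Rightarrow> 'v::ab_group_add \<Rightarrow> 'v) \<Rightarrow> ('m \<Rightarrow> 'v) \<Rightarrow> ('n::finite \<Rightarrow> 'v) \<Rightarrow>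
   ('m \<Rightarrow> 'm) \<Rightarrow> 'q^'n^'n \<Rightarrow> bool" where
  "mat_rep scQ j b f A \<longleftrightarrow>
     (\<forall>m (x::'q^'n). j m = (\<Sum>k\<in>UNIV. scQ (x$k) (b k)) \<longrightarrow>
        j (f m) = (\<Sum>i\<in>UNIV. scQ ((A *v x)$i) (b i)))"

text \<open>Presented as the free abelian group on \<open>M \<times> M\<close> modulo the subgroup \<open>tensor_rel\<close>.\<close>

definition tgen :: "'m \<Rightarrow> 'm \<Rightarrow> ('m \<times> 'm) \<Rightarrow>\<^sub>0 int" where
  "tgen x y = Poly_Mapping.single (x, y) 1"

inductive_set tensor_rel for sc :: "'r::comm_ring_1 \<Rightarrow> 'm::ab_group_add \<Rightarrow> 'm"
  and star :: "('m \<Rightarrow> 'm) \<Rightarrow> ('m \<Rightarrow> 'm)" where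
  rel_zero: "0 \<in> tensor_rel sc star"
| rel_add: "z \<in> tensor_rel sc star \<Longrightarrow> w \<in> tensor_rel sc star \<Longrightarrow> z + w \<in> tensor_rel sc star"
| rel_uminus: "z \<in> tensor_rel sc star \<Longrightarrow> - z \<in> tensor_rel sc star"
| rel_addl: "tgen (x + x') y - tgen x y - tgen x' y \<in> tensor_rel sc star"
| rel_addr: "tgen x (y + y') - tgen x y - tgen x y' \<in> tensor_rel sc star"
| rel_bal: "f \<in> End_R sc \<Longrightarrow> tgen (star f x) y - tgen x (f y) \<in> tensor_rel sc star"

text \<open>\<open>R\<close>-module structure (acting on the left factor: \<open>c(x\<otimes>y) = (cx)\<otimes>y\<close>).\<close>
definition tsmul :: "('r \<Rightarrow> 'm \<Rightarrow> 'm) \<Rightarrow> 'r \<Rightarrow> (('m \<times> 'm) \<Rightarrow>\<^sub>0 int) \<Rightarrow> (('m \<times> 'm) \<Rightarrow>\<^sub>0 int)" where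
  "tsmul sc c z = (\<Sum>p\<in>Poly_Mapping.keys z. Poly_Mapping.single (sc c (fst p), snd p) (Poly_Mapping.lookup z p))"

text \<open>Preimage in the free group of the \<open>R\<close>-submodule
  \<open>T = \<langle>s x\<otimes>y - r y\<otimes>x\<rangle>\<close> of \<open>M\<^sub>* \<otimes>\<^sub>E M\<close>.\<close>
inductive_set T_lift for sc :: "'r::comm_ring_1 \<Rightarrow> 'm::ab_group_add \<Rightarrow> 'm"
  and star :: "('m \<Rightarrow> 'm) \<Rightarrow> ('m \<Rightarrow> 'm)" and r :: 'r and s :: 'r where
  T_rel: "z \<in> tensor_rel sc star \<Longrightarrow> z \<in> T_lift sc star r s"
| T_gen: "tgen (sc s x) y - tgen (sc r y) x \<in> T_lift sc star r s"
| T_add: "z \<in> T_lift sc star r s \<Longrightarrow> w \<in> T_lift sc star r s \<Longrightarrow> z + w \<in> T_lift sc star r s"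
| T_uminus: "z \<in> T_lift sc star r s \<Longrightarrow> - z \<in> T_lift sc star r s"
| T_smul: "z \<in> T_lift sc star r s \<Longrightarrow> tsmul sc c z \<in> T_lift sc star r s"

text \<open>\<open>T\<close> is torsion: every element of \<open>T\<close> is killed by a nonzerodivisor
  (equivalently \<open>T \<otimes>\<^sub>R Q = 0\<close>).\<close>
definition T_torsion :: "('r::comm_ring_1 \<Rightarrow> 'm::ab_group_add \<Rightarrow> 'm) \<Rightarrow> (('m \<Rightarrow> 'm) \<Rightarrow> ('m \<Rightarrow> 'm)) \<Rightarrow> 'r \<Rightarrow> 'r \<Rightarrow> bool" where
  "T_torsion sc star r s \<longleftrightarrow>
     (\<forall>z\<in>T_lift sc star r s. \<exists>t. nzd t \<and> tsmul sc t z \<in> tensor_rel sc star)"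

end

theory Submission
  imports Defs
begin


lemma tsmul_K:
  assumes "finite K" "Poly_Mapping.keys z \<subseteq> K"
  shows "tsmul sc c z = (\<Sum>p\<in>K. Poly_Mapping.single (sc c (fst p), snd p) (Poly_Mapping.lookup z p))"
  unfolding tsmul_def
proof (rule sum.mono_neutral_left[OF assms])
  show "\<forall>i\<in>K - Poly_Mapping.keys z. Poly_Mapping.single (sc c (fst i), snd i) (Poly_Mapping.lookup z i) = 0"
    by (simp add: in_keys_iff)
qed

lemma tsmul_add: "tsmul sc c (z + w) = tsmul sc c z + tsmul sc c w"
proof -
  let ?K = "Poly_Mapping.keys z \<union> Poly_Mapping.keys w"
  let ?g = "\<lambda>u p. Poly_Mapping.single (sc c (fst p), snd p) (Poly_Mapping.lookup u p)"
  have f: "finite ?K" by simp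
  have k: "Poly_Mapping.keys (z + w) \<subseteq> ?K" by (rule keys_add)
  have "tsmul sc c (z + w) = (\<Sum>p\<in>?K. ?g (z+w) p)"
    by (rule tsmul_K[OF f k])
  also have "\<dots> = (\<Sum>p\<in>?K. ?g z p) + (\<Sum>p\<in>?K. ?g w p)"
    unfolding lookup_add single_add by (rule sum.distrib)
  also have "(\<Sum>p\<in>?K. ?g z p) = tsmul sc c z"
    by (rule tsmul_K[OF f, symmetric]) blast
  also have "(\<Sum>p\<in>?K. ?g w p) = tsmul sc c w"
    by (rule tsmul_K[OF f, symmetric]) blast
  finally show ?thesis .
qed

lemma tsm_zero: "tsmul sc c 0 = 0" unfolding tsmul_def by simp

lemma tsm_minus: "tsmul sc c (- z) = - tsmul sc c z"
proof -
  have "tsmul sc c (- z) + tsmul sc c z = 0"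
    unfolding tsmul_add[symmetric] by (simp add: tsm_zero)
  then show ?thesis by (simp add: eq_neg_iff_add_eq_0)
qed

lemma tsm_diff: "tsmul sc c (z - w) = tsmul sc c z - tsmul sc c w"
  using tsmul_add[of sc c z "-w"] tsm_minus[of sc c w] by simp

lemma tsm_sum: "tsmul sc c (sum g A) = (\<Sum>x\<in>A. tsmul sc c (g x))"
  by (induct A rule: infinite_finite_induct) (simp_all add: tsm_zero tsmul_add)

lemma tsmul_single: "tsmul sc c (Poly_Mapping.single (x,y) n) = Poly_Mapping.single (sc c x, y) n"
  by (cases "n = 0") (simp_all add: tsmul_def)

lemma tsmul_tgen: "tsmul sc c (tgen x y) = tgen (sc c x) y"
  by (simp add: tgen_def tsmul_single)

lemma tsmul_comp:
  assumes "module sc"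
  shows "tsmul sc a (tsmul sc b z) = tsmul sc (a*b) z"
proof -
  have "tsmul sc a (tsmul sc b z) = (\<Sum>p\<in>Poly_Mapping.keys z. tsmul sc a (Poly_Mapping.single (sc b (fst p), snd p) (Poly_Mapping.lookup z p)))"
    unfolding tsmul_def[where c=b] by (rule tsm_sum)
  also have "\<dots> = (\<Sum>p\<in>Poly_Mapping.keys z. Poly_Mapping.single (sc (a*b) (fst p), snd p) (Poly_Mapping.lookup z p))"
    unfolding tsmul_single module.scale_scale[OF assms] ..
  also have "\<dots> = tsmul sc (a*b) z" unfolding tsmul_def ..
  finally show ?thesis .
qed

lemma tsmul_rel:
  assumes "module sc" "R_star_algebra sc star" "z \<in> tensor_rel sc star"
  shows "tsmul sc c z \<in> tensor_rel sc star"
  using assms(3)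
proof induction
  case rel_zero show ?case unfolding tsm_zero by (rule tensor_rel.rel_zero)
next
  case (rel_add z w) show ?case unfolding tsmul_add by (rule tensor_rel.rel_add[OF rel_add(3,4)])
next
  case (rel_uminus z) show ?case unfolding tsm_minus by (rule tensor_rel.rel_uminus[OF rel_uminus(2)])
next
  case (rel_addl x x' y)
  have e: "sc c (x + x') = sc c x + sc c x'" by (rule module.scale_right_distrib[OF assms(1)])
  show ?case unfolding tsm_diff tsmul_tgen e by (rule tensor_rel.rel_addl)
next
  case (rel_addr x y y')
  show ?case unfolding tsm_diff tsmul_tgen by (rule tensor_rel.rel_addr)
next
  case (rel_bal f x y)
  have "star f \<in> End_R sc" by (rule bspec[OF conjunct1[OF assms(2)[unfolded R_star_algebra_def]] rel_bal])
  then have h: "module_hom sc sc (star f)" unfolding End_R_def by (rule CollectD)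
  have e: "star f (sc c x) = sc c (star f x)"
    by (rule module_hom.scale[OF h])
  show ?case unfolding tsm_diff tsmul_tgen e[symmetric] by (rule tensor_rel.rel_bal[OF rel_bal])
qed



lemma nzd_mult: "nzd a \<Longrightarrow> nzd b \<Longrightarrow> nzd (a * b)"
  unfolding nzd_def by (metis mult.assoc)

lemma nzd_one: "nzd 1" unfolding nzd_def by simp

lemma nzd_prod: "(\<And>g. g \<in> B \<Longrightarrow> nzd (S g)) \<Longrightarrow> nzd (prod S B)"
  by (induct B rule: infinite_finite_induct) (simp_all add: nzd_one nzd_mult)

lemma coords:
  fixes scQ :: "'q::comm_ring_1 \<Rightarrow> 'v::ab_group_add \<Rightarrow> 'v" and b :: "'n::finite \<Rightarrow> 'v"
  assumes modV: "module scQ"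
    and basis: "inj b" "module.independent scQ (range b)" "module.span scQ (range b) = UNIV"
  shows "\<exists>x::'q^'n. v = (\<Sum>k\<in>UNIV. scQ (x$k) (b k))"
    and "(\<Sum>k\<in>UNIV. scQ (x$k) (b k)) = (\<Sum>k\<in>UNIV. scQ (y$k) (b k)) \<Longrightarrow> x = y"
proof -
  have fin: "finite (range b)" by simp
  have "v \<in> module.span scQ (range b)" using basis(3) by simp
  then obtain u where u: "v = (\<Sum>w\<in>range b. scQ (u w) w)"
    unfolding module.span_finite[OF modV fin] by blast
  also have "\<dots> = (\<Sum>k\<in>UNIV. scQ (u (b k)) (b k))"
    by (rule sum.reindex_cong[of b]) (use basis(1) in \<open>auto simp: inj_on_def\<close>)
  also have "\<dots> = (\<Sum>k\<in>UNIV. scQ ((\<chi> k. u (b k))$k) (b k))" by simp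
  finally show "\<exists>x::'q^'n. v = (\<Sum>k\<in>UNIV. scQ (x$k) (b k))" by blast
next
  assume eq: "(\<Sum>k\<in>UNIV. scQ (x$k) (b k)) = (\<Sum>k\<in>UNIV. scQ (y$k) (b k))"
  define g where "g w = x $ (inv b w) - y $ (inv b w)" for w
  have "(\<Sum>w\<in>range b. scQ (g w) w) = (\<Sum>k\<in>UNIV. scQ (g (b k)) (b k))"
    by (rule sum.reindex_cong[of b]) (use basis(1) in \<open>auto simp: inj_on_def\<close>)
  also have "\<dots> = (\<Sum>k\<in>UNIV. scQ (x$k) (b k) - scQ (y$k) (b k))"
    by (simp add: g_def basis(1) module.scale_left_diff_distrib[OF modV])
  also have "\<dots> = 0" by (simp add: sum_subtractf eq)
  finally have z: "(\<Sum>w\<in>range b. scQ (g w) w) = 0" .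
  have "g (b k) = 0" for k
    by (rule module.independentD[OF modV basis(2) _ _ z]) auto
  then show "x = y" by (simp add: g_def basis(1) vec_eq_iff)
qed



lemma bilin_swap:
  fixes X Y :: "'a::comm_ring_1^'n::finite" and C :: "'a^'n^'n"
  assumes Csym: "\<And>i l. C$l$i = a * C$i$l"
  shows "(\<Sum>i\<in>UNIV. X$i * (\<Sum>l\<in>UNIV. C$i$l * Y$l)) = a * (\<Sum>i\<in>UNIV. Y$i * (\<Sum>l\<in>UNIV. C$i$l * X$l))"
proof -
  have "(\<Sum>i\<in>UNIV. X$i * (\<Sum>l\<in>UNIV. C$i$l * Y$l)) = (\<Sum>i\<in>UNIV. \<Sum>l\<in>UNIV. X$i * (C$i$l * Y$l))"
    by (simp only: sum_distrib_left)
  also have "\<dots> = (\<Sum>l\<in>UNIV. \<Sum>i\<in>UNIV. X$i * (C$i$l * Y$l))" by (rule sum.swap)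
  also have "\<dots> = (\<Sum>l\<in>UNIV. \<Sum>i\<in>UNIV. a * (Y$l * (C$l$i * X$i)))"
  proof (rule sum.cong[OF refl], rule sum.cong[OF refl])
    fix l i
    have "X$i * (C$i$l * Y$l) = X$i * ((a * C$l$i) * Y$l)" using Csym[of l i] Csym[of i l] by simp
    also have "\<dots> = a * (Y$l * (C$l$i * X$i))" by (simp only: mult.commute mult.left_commute)
    finally show "X$i * (C$i$l * Y$l) = a * (Y$l * (C$l$i * X$i))" .
  qed
  also have "\<dots> = a * (\<Sum>i\<in>UNIV. Y$i * (\<Sum>l\<in>UNIV. C$i$l * X$l))"
    by (simp only: sum_distrib_left)
  finally show ?thesis .
qed

lemma bilin_pull:
  fixes X Y :: "'a::comm_ring_1^'n::finite" and C :: "'a^'n^'n"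
  shows "(\<Sum>i\<in>UNIV. c * Y$i * (\<Sum>l\<in>UNIV. C$i$l * (d * X$l))) = c * d * (\<Sum>i\<in>UNIV. Y$i * (\<Sum>l\<in>UNIV. C$i$l * X$l))"
proof -
  have "(\<Sum>i\<in>UNIV. c * Y$i * (\<Sum>l\<in>UNIV. C$i$l * (d * X$l))) = (\<Sum>i\<in>UNIV. (c * d) * (Y$i * (\<Sum>l\<in>UNIV. C$i$l * X$l)))"
  proof (rule sum.cong[OF refl])
    fix i
    have "(\<Sum>l\<in>UNIV. C$i$l * (d * X$l)) = (\<Sum>l\<in>UNIV. d * (C$i$l * X$l))"
      by (simp only: mult.commute mult.left_commute)
    also have "\<dots> = d * (\<Sum>l\<in>UNIV. C$i$l * X$l)" by (simp only: sum_distrib_left)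
    finally show "c * Y$i * (\<Sum>l\<in>UNIV. C$i$l * (d * X$l)) = (c * d) * (Y$i * (\<Sum>l\<in>UNIV. C$i$l * X$l))"
      by (simp only: mult.commute mult.left_commute mult.assoc)
  qed
  also have "\<dots> = c * d * (\<Sum>i\<in>UNIV. Y$i * (\<Sum>l\<in>UNIV. C$i$l * X$l))" by (simp only: sum_distrib_left)
  finally show ?thesis .
qed



lemma sum_if_k:
  fixes w :: "'n::finite \<Rightarrow> 'a::comm_ring_1"
  shows "(\<Sum>k\<in>UNIV. (if k = k0 then z else 0) * w k) = z * w k0"
proof -
  have "\<And>k. (if k = k0 then z else 0) * w k = (if k = k0 then z * w k else 0)" by simp
  then show ?thesis by (simp add: sum.delta)
qed

lemma rel_diff: "z \<in> tensor_rel sc star \<Longrightarrow> w \<in> tensor_rel sc star \<Longrightarrow> z - w \<in> tensor_rel sc star"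
  using tensor_rel.rel_add[OF _ tensor_rel.rel_uminus, of z sc star w] by simp

theorem lemma3p3:
  fixes sc :: "'r::comm_ring_1 \<Rightarrow> 'm::ab_group_add \<Rightarrow> 'm"
    and \<iota> :: "'r \<Rightarrow> 'q::comm_ring_1"
    and scQ :: "'q \<Rightarrow> 'v::ab_group_add \<Rightarrow> 'v"
    and j :: "'m \<Rightarrow> 'v"
    and b :: "'n::finite \<Rightarrow> 'v"
    and star :: "('m \<Rightarrow> 'm) \<Rightarrow> ('m \<Rightarrow> 'm)"
    and C :: "'q^'n^'n" and a :: 'q and r s :: 'r
  assumes noeth: "noetherian_ring TYPE('r)"
    and loc: "local_ring TYPE('r)"
    and Q: "is_total_quotient_ring \<iota>"
    and M: "fin_gen_module sc"
    and MS: "is_localized_module \<iota> sc scQ j"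
    and basis: "inj b" "module.independent scQ (range b)" "module.span scQ (range b) = UNIV"
    and E: "R_star_algebra sc star"
    and C_inv: "invertible C"
    and star_form: "\<forall>f\<in>End_R sc. \<forall>A. mat_rep scQ j b f A \<longrightarrow>
                       mat_rep scQ j b (star f) (matrix_inv C ** transpose A ** C)"
    and C_sym: "transpose C = (\<chi> i k. a * C$i$k)"
    and a_sq: "a * a = 1"
    and rs: "nzd r" "nzd s" "\<iota> r = a * \<iota> s"
  shows "T_torsion sc star r s"
proof -
  have modM: "module sc" using M unfolding fin_gen_module_def by blast
  obtain B where Bfin: "finite B" and Bspan: "module.span sc B = UNIV"
    using M unfolding fin_gen_module_def by blast
  have modV: "module scQ" using MS unfolding is_localized_module_def by blast
  have jadd: "\<And>x y. j (x + y) = j x + j y" using MS unfolding is_localized_module_def by blast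
  have jsc: "\<And>c x. j (sc c x) = scQ (\<iota> c) (j x)" using MS unfolding is_localized_module_def by blast
  have jsurj: "\<And>v. \<exists>m s. nzd s \<and> scQ (\<iota> s) v = j m" using MS unfolding is_localized_module_def by blast
  have jker: "\<And>m. j m = 0 \<Longrightarrow> \<exists>s. nzd s \<and> sc s m = 0" using MS unfolding is_localized_module_def by blast
  have i1: "\<iota> 1 = 1" using Q unfolding is_total_quotient_ring_def by blast
  have iadd: "\<And>x y. \<iota> (x + y) = \<iota> x + \<iota> y" using Q unfolding is_total_quotient_ring_def by blast
  have imul: "\<And>x y. \<iota> (x * y) = \<iota> x * \<iota> y" using Q unfolding is_total_quotient_ring_def by blast
  have ifrac: "\<And>q. \<exists>x s. nzd s \<and> q * \<iota> s = \<iota> x" using Q unfolding is_total_quotient_ring_def by blast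
  have iker: "\<And>x. \<iota> x = 0 \<Longrightarrow> \<exists>s. nzd s \<and> s * x = 0" using Q unfolding is_total_quotient_ring_def by blast
  have iadditive: "Modules.additive \<iota>" by unfold_locales (rule iadd)
  have jadditive: "Modules.additive j" by unfold_locales (rule jadd)
  have i0: "\<iota> 0 = 0" by (rule Modules.additive.zero[OF iadditive])
  have iinj: "\<And>x y. \<iota> x = \<iota> y \<Longrightarrow> x = y"
  proof -
    fix x y assume "\<iota> x = \<iota> y"
    then have "\<iota> (x - y) = 0" using Modules.additive.diff[OF iadditive, of x y] by simp
    then obtain t where "nzd t" "t * (x - y) = 0" using iker by blast
    then have "x - y = 0" unfolding nzd_def by blast
    then show "x = y" by simp
  qed
  define Sb where "Sb x = (\<Sum>k\<in>UNIV. scQ (x$k) (b k))" for x :: "'q^'n"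
  have Sb_ex: "\<And>v. \<exists>x. v = Sb x" using coords(1)[OF modV basis] unfolding Sb_def by blast
  have Sb_inj: "\<And>x y. Sb x = Sb y \<Longrightarrow> x = y" using coords(2)[OF modV basis] unfolding Sb_def by blast
  have Sb_add: "\<And>x y. Sb x + Sb y = Sb (x + y)"
    unfolding Sb_def by (simp add: module.scale_left_distrib[OF modV] sum.distrib)
  have Sb_sc: "\<And>q x. scQ q (Sb x) = Sb (\<chi> k. q * x$k)"
    unfolding Sb_def by (simp add: module.scale_sum_right[OF modV] module.scale_scale[OF modV])
  define \<kappa> where "\<kappa> v = (SOME x. v = Sb x)" for v
  have \<kappa>_eq: "\<And>v. v = Sb (\<kappa> v)" unfolding \<kappa>_def by (rule someI_ex[OF Sb_ex])
  have \<kappa>_uniq: "\<And>v x. v = Sb x \<Longrightarrow> \<kappa> v = x" using \<kappa>_eq Sb_inj by metis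
  obtain k0 :: 'n where True by simp
  define c0 where "c0 m = \<kappa> (j m) $ k0" for m
  have c0_add: "\<And>m m'. c0 (m + m') = c0 m + c0 m'"
  proof -
    fix m m'
    have "j (m + m') = Sb (\<kappa> (j m) + \<kappa> (j m'))"
      unfolding jadd Sb_add[symmetric] using \<kappa>_eq by metis
    then have "\<kappa> (j (m + m')) = \<kappa> (j m) + \<kappa> (j m')" by (rule \<kappa>_uniq)
    then show "c0 (m + m') = c0 m + c0 m'" unfolding c0_def by simp
  qed
  have c0_sc: "\<And>c m. c0 (sc c m) = \<iota> c * c0 m"
  proof -
    fix c m
    have "j (sc c m) = Sb (\<chi> k. \<iota> c * \<kappa> (j m) $ k)"
      unfolding jsc Sb_sc[symmetric] using \<kappa>_eq by metis
    then have "\<kappa> (j (sc c m)) = (\<chi> k. \<iota> c * \<kappa> (j m) $ k)" by (rule \<kappa>_uniq)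
    then show "c0 (sc c m) = \<iota> c * c0 m" unfolding c0_def by simp
  qed
  have c0_0: "c0 0 = 0" using c0_add[of 0 0] by simp
  have "\<forall>g. \<exists>p. nzd (snd p) \<and> c0 g * \<iota> (snd p) = \<iota> (fst p)" using ifrac by auto
  then obtain P where P: "\<And>g. nzd (snd (P g)) \<and> c0 g * \<iota> (snd (P g)) = \<iota> (fst (P g))"
    using choice by metis
  define u where "u = (\<Prod>g\<in>B. snd (P g))"
  have u_nzd: "nzd u" unfolding u_def by (rule nzd_prod) (use P in blast)
  have h0: "\<exists>d. \<iota> d = \<iota> u * c0 0" by (rule exI[of _ 0]) (simp add: i0 c0_0)
  have hS: "\<And>c x y. x \<in> B \<Longrightarrow> \<exists>d. \<iota> d = \<iota> u * c0 y \<Longrightarrow> \<exists>d. \<iota> d = \<iota> u * c0 (sc c x + y)"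
  proof -
    fix c x y assume xB: "x \<in> B" and "\<exists>d. \<iota> d = \<iota> u * c0 y"
    then obtain dy where dy: "\<iota> dy = \<iota> u * c0 y" by blast
    define rest where "rest = (\<Prod>g\<in>B - {x}. snd (P g))"
    have "u = snd (P x) * rest" unfolding u_def rest_def by (rule prod.remove[OF Bfin xB])
    then have "\<iota> u * c0 x = \<iota> rest * (c0 x * \<iota> (snd (P x)))" by (simp add: imul mult.commute mult.left_commute)
    also have "\<dots> = \<iota> (rest * fst (P x))" using P[of x] by (simp add: imul)
    finally have dx: "\<iota> u * c0 x = \<iota> (rest * fst (P x))" .
    have "\<iota> (c * (rest * fst (P x)) + dy) = \<iota> c * \<iota> (rest * fst (P x)) + \<iota> dy"
      by (simp only: iadd imul)
    also have "\<dots> = \<iota> c * (\<iota> u * c0 x) + \<iota> u * c0 y" by (simp only: dx dy)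
    also have "\<dots> = \<iota> u * c0 (sc c x + y)" by (simp add: c0_add c0_sc algebra_simps)
    finally have "\<iota> (c * (rest * fst (P x)) + dy) = \<iota> u * c0 (sc c x + y)" .
    then show "\<exists>d. \<iota> d = \<iota> u * c0 (sc c x + y)" by blast
  qed
  have ex: "\<And>m. \<exists>d. \<iota> d = \<iota> u * c0 m"
  proof -
    fix m
    have mspan: "m \<in> module.span sc B" using Bspan by simp
    show "\<exists>d. \<iota> d = \<iota> u * c0 m"
      by (rule module.span_induct_alt[OF modM mspan, where h = "\<lambda>m. \<exists>d. \<iota> d = \<iota> u * c0 m", OF h0 hS])
  qed
  define \<phi> where "\<phi> m = (THE d. \<iota> d = \<iota> u * c0 m)" for m
  have \<phi>_spec: "\<And>m. \<iota> (\<phi> m) = \<iota> u * c0 m"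
  proof -
    fix m
    have "\<exists>!d. \<iota> d = \<iota> u * c0 m" using ex[of m] iinj by metis
    then show "\<iota> (\<phi> m) = \<iota> u * c0 m" unfolding \<phi>_def by (rule theI')
  qed
  have \<phi>_add: "\<And>m m'. \<phi> (m + m') = \<phi> m + \<phi> m'"
    by (rule iinj) (simp add: iadd \<phi>_spec c0_add algebra_simps)
  have \<phi>_sc: "\<And>c m. \<phi> (sc c m) = c * \<phi> m"
    by (rule iinj) (simp add: imul \<phi>_spec c0_sc algebra_simps)
  define fe where "fe y = (\<lambda>m. sc (\<phi> m) y)" for y
  have fe_End: "\<And>y. fe y \<in> End_R sc"
    unfolding End_R_def fe_def mem_Collect_eq module_hom_def module_hom_axioms_def
    using modM by (simp add: \<phi>_add \<phi>_sc module.scale_left_distrib[OF modM] module.scale_scale[OF modM])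
  define Am where "Am y = (\<chi> i k. if k = k0 then \<iota> u * \<kappa> (j y) $ i else 0)" for y
  have fe_rep: "\<And>y. mat_rep scQ j b (fe y) (Am y)"
    unfolding mat_rep_def
  proof (intro allI impI)
    fix y m and x :: "'q^'n"
    assume jm: "j m = (\<Sum>k\<in>UNIV. scQ (x$k) (b k))"
    then have "\<kappa> (j m) = x" using \<kappa>_uniq unfolding Sb_def by blast
    then have c0m: "c0 m = x $ k0" unfolding c0_def by simp
    have "j (fe y m) = scQ (\<iota> u * x $ k0) (Sb (\<kappa> (j y)))"
      unfolding fe_def jsc \<phi>_spec c0m using \<kappa>_eq by metis
    also have "\<dots> = Sb (\<chi> i. (\<iota> u * x $ k0) * \<kappa> (j y) $ i)" by (rule Sb_sc)
    also have "(\<chi> i. (\<iota> u * x $ k0) * \<kappa> (j y) $ i) = Am y *v x"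
      unfolding vec_eq_iff matrix_vector_mult_def Am_def
      by (simp add: sum_if_k)
    finally show "j (fe y m) = (\<Sum>i\<in>UNIV. scQ ((Am y *v x) $ i) (b i))" unfolding Sb_def .
  qed
  have star_rep: "\<And>y m x. j m = Sb x \<Longrightarrow> j (star (fe y) m) = Sb ((matrix_inv C ** transpose (Am y) ** C) *v x)"
  proof -
    fix y m x assume "j m = Sb x"
    moreover have "mat_rep scQ j b (star (fe y)) (matrix_inv C ** transpose (Am y) ** C)"
      using star_form fe_End fe_rep by blast
    ultimately show "j (star (fe y) m) = Sb ((matrix_inv C ** transpose (Am y) ** C) *v x)"
      unfolding mat_rep_def Sb_def by blast
  qed
  have Csym: "\<And>i l. C$l$i = a * C$i$l"
  proof -
    fix i l
    have "transpose C $ i $ l = C$l$i" by (simp add: transpose_def)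
    then show "C$l$i = a * C$i$l" using C_sym by simp
  qed
  have key: "\<And>x y. transpose (Am y) *v (C *v (\<chi> k. \<iota> s * \<kappa> (j x) $ k))
                  = transpose (Am x) *v (C *v (\<chi> k. \<iota> r * \<kappa> (j y) $ k))"
  proof -
    fix x y
    define X where "X = \<kappa> (j x)"
    define Y where "Y = \<kappa> (j y)"
    define S where "S = (\<Sum>i\<in>UNIV. Y$i * (\<Sum>l\<in>UNIV. C$i$l * X$l))"
    define S' where "S' = (\<Sum>i\<in>UNIV. X$i * (\<Sum>l\<in>UNIV. C$i$l * Y$l))"
    have SS: "S' = a * S" unfolding S_def S'_def by (rule bilin_swap[OF Csym])
    have L: "(\<Sum>i\<in>UNIV. \<iota> u * Y$i * (\<Sum>l\<in>UNIV. C$i$l * (\<iota> s * X$l))) = \<iota> u * \<iota> s * S"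
      unfolding S_def by (rule bilin_pull)
    have R: "(\<Sum>i\<in>UNIV. \<iota> u * X$i * (\<Sum>l\<in>UNIV. C$i$l * (\<iota> r * Y$l))) = \<iota> u * \<iota> r * S'"
      unfolding S'_def by (rule bilin_pull)
    have LR: "\<iota> u * \<iota> s * S = \<iota> u * \<iota> r * S'"
    proof -
      have "\<iota> u * \<iota> r * S' = \<iota> u * \<iota> s * S * (a * a)" unfolding SS rs(3) by (simp add: ac_simps)
      then show ?thesis using a_sq by simp
    qed
    show "transpose (Am y) *v (C *v (\<chi> k. \<iota> s * \<kappa> (j x) $ k))
                  = transpose (Am x) *v (C *v (\<chi> k. \<iota> r * \<kappa> (j y) $ k))"
      unfolding vec_eq_iff
    proof
      fix k
      show "(transpose (Am y) *v (C *v (\<chi> k. \<iota> s * \<kappa> (j x) $ k))) $ k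
          = (transpose (Am x) *v (C *v (\<chi> k. \<iota> r * \<kappa> (j y) $ k))) $ k"
      proof (cases "k = k0")
        case True
        have 1: "(transpose (Am y) *v (C *v (\<chi> k. \<iota> s * \<kappa> (j x) $ k))) $ k
           = (\<Sum>i\<in>UNIV. \<iota> u * Y$i * (\<Sum>l\<in>UNIV. C$i$l * (\<iota> s * X$l)))"
          using True unfolding X_def Y_def by (simp add: matrix_vector_mult_def transpose_def Am_def)
        have 2: "(transpose (Am x) *v (C *v (\<chi> k. \<iota> r * \<kappa> (j y) $ k))) $ k
           = (\<Sum>i\<in>UNIV. \<iota> u * X$i * (\<Sum>l\<in>UNIV. C$i$l * (\<iota> r * Y$l)))"
          using True unfolding X_def Y_def by (simp add: matrix_vector_mult_def transpose_def Am_def)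
        show ?thesis unfolding 1 2 L R LR ..
      next
        case False
        then show ?thesis by (simp add: matrix_vector_mult_def transpose_def Am_def)
      qed
    qed
  qed
  have id_End: "id \<in> End_R sc"
    unfolding End_R_def mem_Collect_eq module_hom_def module_hom_axioms_def using modM by simp
  have sc_End: "\<And>c. (\<lambda>v. sc c v) \<in> End_R sc"
    unfolding End_R_def mem_Collect_eq module_hom_def module_hom_axioms_def using modM
    by (simp add: module.scale_right_distrib[OF modM] module.scale_left_commute[OF modM])
  have star_sc: "\<And>c. star (\<lambda>v. sc c v) = (\<lambda>v. sc c v)"
  proof -
    fix c
    have E5: "\<forall>c. \<forall>f\<in>End_R sc. star (\<lambda>x. sc c (f x)) = (\<lambda>x. sc c (star f x))"
      using E unfolding R_star_algebra_def by blast
    have E4: "star id = id" using E unfolding R_star_algebra_def by blast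
    have "star (\<lambda>x. sc c (id x)) = (\<lambda>x. sc c (star id x))" using E5 id_End by blast
    then show "star (\<lambda>v. sc c v) = (\<lambda>v. sc c v)" unfolding E4 by simp
  qed
  have jdiff: "\<And>x y. j (x - y) = j x - j y" by (rule Modules.additive.diff[OF jadditive])
  have gen: "\<And>x y. \<exists>t. nzd t \<and> tsmul sc t (tgen (sc s x) y - tgen (sc r y) x) \<in> tensor_rel sc star"
  proof -
    fix x y
    obtain m0 s0 where s0: "nzd s0" "scQ (\<iota> s0) (b k0) = j m0" using jsurj by blast
    have "\<And>k. scQ ((\<chi> k. if k = k0 then \<iota> s0 else 0)$k) (b k) = (if k = k0 then scQ (\<iota> s0) (b k) else 0)"
      by (simp add: module.scale_zero_left[OF modV])
    then have "Sb (\<chi> k. if k = k0 then \<iota> s0 else 0) = scQ (\<iota> s0) (b k0)"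
      unfolding Sb_def by (simp add: sum.delta)
    then have "\<kappa> (j m0) = (\<chi> k. if k = k0 then \<iota> s0 else 0)" using s0(2) \<kappa>_uniq by metis
    then have "c0 m0 = \<iota> s0" unfolding c0_def by simp
    then have "\<iota> (\<phi> m0) = \<iota> (u * s0)" using \<phi>_spec imul by metis
    then have pdef: "\<phi> m0 = u * s0" by (rule iinj)
    define p where "p = \<phi> m0"
    have p_nzd: "nzd p" unfolding p_def pdef by (rule nzd_mult[OF u_nzd s0(1)])
    define \<alpha> where "\<alpha> = star (fe y) (sc s x)"
    define \<beta> where "\<beta> = star (fe x) (sc r y)"
    have jsx: "j (sc s x) = Sb (\<chi> k. \<iota> s * \<kappa> (j x) $ k)" unfolding jsc Sb_sc[symmetric] using \<kappa>_eq by metis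
    have jry: "j (sc r y) = Sb (\<chi> k. \<iota> r * \<kappa> (j y) $ k)" unfolding jsc Sb_sc[symmetric] using \<kappa>_eq by metis
    have "j \<alpha> = Sb (matrix_inv C *v (transpose (Am y) *v (C *v (\<chi> k. \<iota> s * \<kappa> (j x) $ k))))"
      unfolding \<alpha>_def star_rep[OF jsx] by (simp only: matrix_vector_mul_assoc[symmetric])
    also have "\<dots> = j \<beta>"
      unfolding \<beta>_def star_rep[OF jry] key by (simp only: matrix_vector_mul_assoc[symmetric])
    finally have "j (\<alpha> - \<beta>) = 0" unfolding jdiff by simp
    then obtain t0 where t0: "nzd t0" "sc t0 (\<alpha> - \<beta>) = 0" using jker by blast
    then have t0ab: "sc t0 \<alpha> = sc t0 \<beta>" by (simp add: module.scale_right_diff_distrib[OF modM])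
    have R1: "tgen (sc p (sc s x)) y - tgen (sc s x) (sc p y) \<in> tensor_rel sc star"
      using tensor_rel.rel_bal[OF sc_End[of p], where x="sc s x" and y=y and star=star] unfolding star_sc .
    have R3: "tgen (sc p (sc r y)) x - tgen (sc r y) (sc p x) \<in> tensor_rel sc star"
      using tensor_rel.rel_bal[OF sc_End[of p], where x="sc r y" and y=x and star=star] unfolding star_sc .
    have R2: "tgen \<alpha> m0 - tgen (sc s x) (sc p y) \<in> tensor_rel sc star"
      using tensor_rel.rel_bal[OF fe_End[of y], where x="sc s x" and y=m0 and star=star] unfolding \<alpha>_def fe_def p_def .
    have R4: "tgen \<beta> m0 - tgen (sc r y) (sc p x) \<in> tensor_rel sc star"
      using tensor_rel.rel_bal[OF fe_End[of x], where x="sc r y" and y=m0 and star=star] unfolding \<beta>_def fe_def p_def .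
    define Dz where "Dz = tgen (sc s x) y - tgen (sc r y) x"
    have W: "tsmul sc p Dz - (tgen \<alpha> m0 - tgen \<beta> m0) \<in> tensor_rel sc star"
    proof -
      have eq: "tsmul sc p Dz - (tgen \<alpha> m0 - tgen \<beta> m0)
        = (tgen (sc p (sc s x)) y - tgen (sc s x) (sc p y) - (tgen \<alpha> m0 - tgen (sc s x) (sc p y)))
          - (tgen (sc p (sc r y)) x - tgen (sc r y) (sc p x) - (tgen \<beta> m0 - tgen (sc r y) (sc p x)))"
        unfolding Dz_def tsm_diff tsmul_tgen by (simp add: algebra_simps)
      show ?thesis unfolding eq by (rule rel_diff[OF rel_diff[OF R1 R2] rel_diff[OF R3 R4]])
    qed
    have "tsmul sc t0 (tsmul sc p Dz - (tgen \<alpha> m0 - tgen \<beta> m0)) \<in> tensor_rel sc star"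
      by (rule tsmul_rel[OF modM E W])
    also have "tsmul sc t0 (tsmul sc p Dz - (tgen \<alpha> m0 - tgen \<beta> m0)) = tsmul sc (t0 * p) Dz"
      unfolding tsm_diff tsmul_tgen t0ab tsmul_comp[OF modM] by simp
    finally have "tsmul sc (t0 * p) Dz \<in> tensor_rel sc star" .
    then show "\<exists>t. nzd t \<and> tsmul sc t (tgen (sc s x) y - tgen (sc r y) x) \<in> tensor_rel sc star"
      using nzd_mult[OF t0(1) p_nzd] unfolding Dz_def by blast
  qed
  show ?thesis unfolding T_torsion_def
  proof
    fix z assume "z \<in> T_lift sc star r s"
    then show "\<exists>t. nzd t \<and> tsmul sc t z \<in> tensor_rel sc star"
    proof induction
      case (T_rel z)
      then show ?case using nzd_one tsmul_rel[OF modM E] by blast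
    next
      case (T_gen x y)
      then show ?case by (rule gen)
    next
      case (T_add z w)
      then obtain t1 t2 where t: "nzd t1" "tsmul sc t1 z \<in> tensor_rel sc star"
          "nzd t2" "tsmul sc t2 w \<in> tensor_rel sc star" by blast
      have "tsmul sc (t1 * t2) (z + w) = tsmul sc t2 (tsmul sc t1 z) + tsmul sc t1 (tsmul sc t2 w)"
        unfolding tsmul_add tsmul_comp[OF modM] by (simp add: mult.commute)
      moreover have "\<dots> \<in> tensor_rel sc star"
        by (rule tensor_rel.rel_add; rule tsmul_rel[OF modM E]; fact)
      ultimately show ?case using nzd_mult[OF t(1) t(3)] by metis
    next
      case (T_uminus z)
      then obtain t where t: "nzd t" "tsmul sc t z \<in> tensor_rel sc star" by blast
      then show ?case unfolding tsm_minus using tensor_rel.rel_uminus by blast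
    next
      case (T_smul z c)
      then obtain t where t: "nzd t" "tsmul sc t z \<in> tensor_rel sc star" by blast
      have "tsmul sc t (tsmul sc c z) = tsmul sc c (tsmul sc t z)"
        unfolding tsmul_comp[OF modM] by (simp add: mult.commute)
      then show ?case using t tsmul_rel[OF modM E t(2)] by metis
    qed
  qed
qed

end
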